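(* In the changepoint model of the context, for all $0<i\le n$ and $0\le j\le i$, $$c_{ji}=\frac{o_{ji}}{Z_i}\,q_{ji}\,c_{j,i-1}\ \ (j<i),\qquad c_{ii}=\frac{o_{ii}}{Z_i}\Big(1-\sum_{k=0}^{i-1}q_{ki}c_{k,i-1}\Big),$$ where $$Z_i=\Big(\sum_{k=0}^{i-1}o_{ki}\,q_{ki}\,c_{k,i-1}\Big)+o_{ii}\Big(1-\sum_{k=0}^{i-1}q_{ki}c_{k,i-1}\Big),$$ and $c_{00}=1$.
   Context: Model: Let $n\ge 1$ and fix observed data $y_1,\dots,y_n$. Let $(\mathbb X,\mathcal X)$, $(\mathbb Y,\mathcal Y)$ be standard Borel spaces, $\psi$ a $\sigma$-finite measure on $(\mathbb Y,\mathcal Y)$, $\mathcal J$ a probability measure on $(\mathbb X,\mathcal X)$, and $q_{ji}\in[0,1]$ for $0\le j<i\le n$. The model consists of random variables $C_i\in\{0,\dots,i\}$, $X_i\in\mathbb X$, $Y_i\in\mathbb Y$, $i=1,\dots,n$, with joint law factorizing as: $P(C_1=0)=q_{01}$, $P(C_1=1)=1-q_{01}$; for $i\ge2$, $C_i$ depends on the past only through $C_{i-1}$, with $P(C_i=j\mid C_{i-1}=j)=q_{ji}$ and $P(C_i=i\mid C_{i-1}=j)=1-q_{ji}$ ($0\le j\le i-1$); $X_1\sim\mathcal J$ independent of $C_1$; for $i\ge 2$, $X_i$ depends on the past only through $(C_i,X_{i-1})$, with $X_i\sim\mathcal J$ if $C_i=i$ and $X_i=X_{i-1}$ if $C_i<i$;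 $Y_i$ depends on all other variables only through $X_i$, with density $p(Y_i=y\mid X_i=x)$ w.r.t. $\psi$. Assume $\int\prod_{\ell=j}^i p(Y_\ell=y_\ell\mid X_\ell=x)\,\mathcal J(dx)>0$ for all $0<j\le i\le n$. $Y_{a:b}=y_{a:b}$ abbreviates $Y_a=y_a,\dots,Y_b=y_b$. Notation: $c_{ji}=P(C_i=j\mid Y_{1:i}=y_{1:i})$ for $0<i\le n$, $0\le j\le i$; $o_{ji}$ is the density $P(Y_i\in dy_i\mid C_i=j,Y_{j:i-1}=y_{j:i-1})/\psi(dy_i)$ evaluated at $y_i$ (for $j=0$ the conditioning is on $Y_{1:i-1}=y_{1:i-1}$, for $j=i$ only on $C_i=i$). *)

theory Defs
  imports "HOL-Probability.Probability"
begin

text \<open>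
  A path prefix is a list h of pairs (C_l, X_l), l = 1..length h,
  stored at position l - 1.  By convention C_0 = 0 (this matches P(C_1 = 0) = q_01).
  q j i is the parameter q_{ji}; J is the law of fresh segment values; p x y is the
  density p(Y = y | X = x) w.r.t. psi.
\<close>

definition Cof :: "(nat \<times> 'x) list \<Rightarrow> nat \<Rightarrow> nat" where
  "Cof h i = (if i = 0 then 0 else fst (h ! (i - 1)))"

definition Xof :: "(nat \<times> 'x) list \<Rightarrow> nat \<Rightarrow> 'x" where
  "Xof h l = snd (h ! (l - 1))"

text \<open>P(C_k = c | C_{k-1} = cp).\<close>
definition tprob :: "(nat \<Rightarrow> nat \<Rightarrow> real) \<Rightarrow> nat \<Rightarrow> nat \<Rightarrow> nat \<Rightarrow> real" where
  "tprob q k cp c = (if c = k then 1 - q cp k else if c = cp then q cp k else 0)"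

text \<open>Epath q J m h g: starting from the already generated prefix h (of length k-1),
  generate m further steps (C_k, X_k), ... of the model sequentially according to its
  factorisation, and integrate g over the resulting path.  Hence
  Epath q J i [] g is the expectation E[g((C_1,X_1),...,(C_i,X_i))] under the model.
  X_1 ~ J always; for k \<ge> 2, X_k ~ J if C_k = k and X_k = X_{k-1} otherwise.\<close>
fun Epath :: "(nat \<Rightarrow> nat \<Rightarrow> real) \<Rightarrow> 'x measure \<Rightarrow> nat \<Rightarrow> (nat \<times> 'x) list
               \<Rightarrow> ((nat \<times> 'x) list \<Rightarrow> ennreal) \<Rightarrow> ennreal" where
  "Epath q J 0 h g = g h"
| "Epath q J (Suc m) h g =
     (let k = Suc (length h); cp = (if h = [] then 0 else fst (last h)) in
      (\<Sum>c\<in>{cp, k}. ennreal (tprob q k cp c) *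
         (if c = k \<or> h = []
          then (\<integral>\<^sup>+ x. Epath q J m (h @ [(c, x)]) g \<partial>J)
          else Epath q J m (h @ [(c, snd (last h))]) g)))"

text \<open>Joint density (w.r.t. counting measure times psi^(b-a+1)) of
  (C_i = j, Y_a = y_a, ..., Y_b = y_b), for b \<le> i:
  E[ 1{C_i = j} * prod_{l=a..b} p(y_l | X_l) ].\<close>
definition jdens :: "(nat \<Rightarrow> nat \<Rightarrow> real) \<Rightarrow> 'x measure \<Rightarrow> ('x \<Rightarrow> 'y \<Rightarrow> real) \<Rightarrow> (nat \<Rightarrow> 'y)
                      \<Rightarrow> nat \<Rightarrow> nat \<Rightarrow> nat \<Rightarrow> nat \<Rightarrow> ennreal" where
  "jdens q J p y i j a b =
     Epath q J i [] (\<lambda>h. indicator {h'. Cof h' i = j} h *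
                         (\<Prod>l\<in>{a..b}. ennreal (p (Xof h l) (y l))))"

text \<open>Density of Y_{1:i} at y_{1:i}.\<close>
definition mdens :: "(nat \<Rightarrow> nat \<Rightarrow> real) \<Rightarrow> 'x measure \<Rightarrow> ('x \<Rightarrow> 'y \<Rightarrow> real) \<Rightarrow> (nat \<Rightarrow> 'y)
                      \<Rightarrow> nat \<Rightarrow> ennreal" where
  "mdens q J p y i = Epath q J i [] (\<lambda>h. \<Prod>l\<in>{1..i}. ennreal (p (Xof h l) (y l)))"

text \<open>c_{ji} = P(C_i = j | Y_{1:i} = y_{1:i}) (with c_00 = P(C_0 = 0) = 1).\<close>
definition cpost :: "(nat \<Rightarrow> nat \<Rightarrow> real) \<Rightarrow> 'x measure \<Rightarrow> ('x \<Rightarrow> 'y \<Rightarrow> real) \<Rightarrow> (nat \<Rightarrow> 'y)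
                      \<Rightarrow> nat \<Rightarrow> nat \<Rightarrow> real" where
  "cpost q J p y j i = enn2real (jdens q J p y i j 1 i) / enn2real (mdens q J p y i)"

text \<open>o_{ji}: density of Y_i at y_i given C_i = j and Y_{j:i-1} = y_{j:i-1}
  (Y_{1:i-1} for j = 0; only C_i = i for j = i).\<close>
definition opred :: "(nat \<Rightarrow> nat \<Rightarrow> real) \<Rightarrow> 'x measure \<Rightarrow> ('x \<Rightarrow> 'y \<Rightarrow> real) \<Rightarrow> (nat \<Rightarrow> 'y)
                      \<Rightarrow> nat \<Rightarrow> nat \<Rightarrow> real" where
  "opred q J p y j i =
     enn2real (jdens q J p y i j (max j 1) i) / enn2real (jdens q J p y i j (max j 1) (i - 1))"

end

theory Submission
  imports Defs
begin


fun GG :: "(nat \<Rightarrow> nat \<Rightarrow> real) \<Rightarrow> 'x measure \<Rightarrow> (nat \<Rightarrow> 'x \<Rightarrow> ennreal) \<Rightarrow> (nat \<Rightarrow> 'x \<Rightarrow> ennreal)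
   \<Rightarrow> nat \<Rightarrow> nat \<Rightarrow> nat \<Rightarrow> 'x \<Rightarrow> ennreal" where
  "GG q J pf T 0 k cp x0 = T cp x0"
| "GG q J pf T (Suc m) k cp x0 =
     (\<Sum>c\<in>{cp, Suc k}. ennreal (tprob q (Suc k) cp c) *
        (if c = Suc k \<or> k = 0 then (\<integral>\<^sup>+ x. pf (Suc k) x * GG q J pf T m (Suc k) c x \<partial>J)
         else pf (Suc k) x0 * GG q J pf T m (Suc k) c x0))"

lemma GG_meas:
  assumes "\<And>l. pf l \<in> borel_measurable J" "\<And>c. T c \<in> borel_measurable J"
  shows "(\<lambda>x. GG q J pf T m k c x) \<in> borel_measurable J"
  using assms
proof (induction m arbitrary: k c)
  case 0 then show ?case by simp
next
  case (Suc m)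
  show ?case unfolding GG.simps
    apply (rule borel_measurable_sum)
    apply (rule borel_measurable_times_ennreal)
     apply simp
    using Suc by (auto intro!: borel_measurable_times_ennreal)
qed

lemma GG_meas2:
  assumes "\<And>l. pf l \<in> borel_measurable J" "\<And>c. T c \<in> borel_measurable J"
  shows "(\<lambda>x. pf l x * GG q J pf T m k c x) \<in> borel_measurable J"
  by (intro borel_measurable_times_ennreal assms GG_meas)

lemma GG_split:
  "GG q J pf T (m1 + m2) k cp x = GG q J pf (\<lambda>c x. GG q J pf T m2 (k + m1) c x) m1 k cp x"
proof (induction m1 arbitrary: k cp x)
  case 0 then show ?case by simp
next
  case (Suc m1)
  have "\<And>c x. GG q J pf T (m1 + m2) (Suc k) c x = GG q J pf (\<lambda>c x. GG q J pf T m2 (Suc (k + m1)) c x) m1 (Suc k) c x"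
    using Suc.IH[of "Suc k"] by simp
  then show ?case by (simp only: GG.simps add_Suc add_Suc_right)
qed

lemma GG_congT:
  "cp \<le> k \<Longrightarrow> (\<And>c x. c \<le> k + m \<Longrightarrow> T c x = T' c x) \<Longrightarrow> GG q J pf T m k cp x = GG q J pf T' m k cp x"
proof (induction m arbitrary: k cp x)
  case 0 then show ?case by simp
next
  case (Suc m)
  have "\<And>c x. c \<in> {cp, Suc k} \<Longrightarrow> GG q J pf T m (Suc k) c x = GG q J pf T' m (Suc k) c x"
    using Suc by (intro Suc.IH) auto
  then show ?case unfolding GG.simps by (intro sum.cong refl) (simp only:)
qed

lemma GG_congpf:
  "(\<And>l. k < l \<Longrightarrow> l \<le> k + m \<Longrightarrow> pf l = pf' l) \<Longrightarrow> GG q J pf T m k cp x = GG q J pf' T m k cp x"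
proof (induction m arbitrary: k cp x)
  case 0 then show ?case by simp
next
  case (Suc m)
  have "\<And>c x. GG q J pf T m (Suc k) c x = GG q J pf' T m (Suc k) c x"
    using Suc by (intro Suc.IH) auto
  moreover have "\<And>x. pf (Suc k) x = pf' (Suc k) x" using Suc.prems by auto
  ultimately show ?case by (simp only: GG.simps)
qed

lemma GG_mono:
  "cp \<le> k \<Longrightarrow> (\<And>c x. c \<le> k + m \<Longrightarrow> T c x \<le> T' c x) \<Longrightarrow> GG q J pf T m k cp x \<le> GG q J pf T' m k cp x"
proof (induction m arbitrary: k cp x)
  case 0 then show ?case by simp
next
  case (Suc m)
  have "\<And>c x. c \<in> {cp, Suc k} \<Longrightarrow> GG q J pf T m (Suc k) c x \<le> GG q J pf T' m (Suc k) c x"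
    using Suc by (intro Suc.IH) auto
  then show ?case unfolding GG.simps
    by (intro sum_mono mult_left_mono) (auto intro!: mult_left_mono nn_integral_mono)
qed


lemma GG_cmult:
  assumes mp: "\<And>l. pf l \<in> borel_measurable J" and mT: "\<And>c. T c \<in> borel_measurable J"
  shows "GG q J pf (\<lambda>c x. K * T c x) m k cp x = K * GG q J pf T m k cp x"
proof (induction m arbitrary: k cp x)
  case 0 then show ?case by simp
next
  case (Suc m)
  have int: "\<And>c. (\<integral>\<^sup>+ x. pf (Suc k) x * (K * GG q J pf T m (Suc k) c x) \<partial>J)
      = K * (\<integral>\<^sup>+ x. pf (Suc k) x * GG q J pf T m (Suc k) c x \<partial>J)"
    by (subst nn_integral_cmult[symmetric]) (auto intro!: GG_meas2 mp mT simp: mult_ac)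
  show ?case unfolding GG.simps Suc.IH int
    by (auto simp: sum_distrib_left mult_ac intro!: sum.cong)
qed

lemma GG_zeroT: "GG q J pf (\<lambda>c x. 0) m k cp x = 0"
  by (induction m arbitrary: k cp x) auto

lemma GG_add:
  assumes mp: "\<And>l. pf l \<in> borel_measurable J" and mT: "\<And>c. T1 c \<in> borel_measurable J"
    "\<And>c. T2 c \<in> borel_measurable J"
  shows "GG q J pf (\<lambda>c x. T1 c x + T2 c x) m k cp x = GG q J pf T1 m k cp x + GG q J pf T2 m k cp x"
proof (induction m arbitrary: k cp x)
  case 0 then show ?case by simp
next
  case (Suc m)
  have int: "\<And>c. (\<integral>\<^sup>+ x. pf (Suc k) x * (GG q J pf T1 m (Suc k) c x + GG q J pf T2 m (Suc k) c x) \<partial>J)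
      = (\<integral>\<^sup>+ x. pf (Suc k) x * GG q J pf T1 m (Suc k) c x \<partial>J) + (\<integral>\<^sup>+ x. pf (Suc k) x * GG q J pf T2 m (Suc k) c x \<partial>J)"
    unfolding distrib_left
    by (rule nn_integral_add) (auto intro!: GG_meas2 mp mT)
  show ?case unfolding GG.simps Suc.IH int
    by (auto simp: sum.distrib[symmetric] distrib_left intro!: sum.cong)
qed

lemma GG_sum:
  assumes mp: "\<And>l. pf l \<in> borel_measurable J" and mT: "\<And>i c. i \<in> K \<Longrightarrow> T i c \<in> borel_measurable J"
    and fin: "finite K"
  shows "GG q J pf (\<lambda>c x. \<Sum>i\<in>K. T i c x) m k cp x = (\<Sum>i\<in>K. GG q J pf (T i) m k cp x)"
  using fin mT
proof (induction K rule: finite_induct)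
  case empty then show ?case by (simp add: GG_zeroT)
next
  case (insert a F)
  have "GG q J pf (\<lambda>c x. \<Sum>i\<in>insert a F. T i c x) m k cp x
     = GG q J pf (\<lambda>c x. T a c x + (\<Sum>i\<in>F. T i c x)) m k cp x"
    using insert by simp
  also have "\<dots> = GG q J pf (T a) m k cp x + GG q J pf (\<lambda>c x. \<Sum>i\<in>F. T i c x) m k cp x"
    using insert by (intro GG_add mp) auto
  finally show ?case using insert by simp
qed

lemma GG_zero_pf:
  assumes mp: "\<And>l. pf l \<in> borel_measurable J" and mT: "\<And>c. T c \<in> borel_measurable J"
  shows "GG q J (\<lambda>l x. 1) T m k cp x = 0 \<Longrightarrow> GG q J pf T m k cp x = 0"
proof (induction m arbitrary: k cp x)
  case 0 then show ?case by simp
next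
  case (Suc m)
  have mG1: "\<And>c. (\<lambda>x. GG q J (\<lambda>l x. 1) T m (Suc k) c x) \<in> borel_measurable J"
    by (rule GG_meas) (auto intro: mT)
  have mG: "\<And>c. (\<lambda>x. pf (Suc k) x * GG q J pf T m (Suc k) c x) \<in> borel_measurable J"
    by (auto intro!: GG_meas2 mT mp)
  have "\<And>c. c \<in> {cp, Suc k} \<Longrightarrow> ennreal (tprob q (Suc k) cp c) *
        (if c = Suc k \<or> k = 0 then (\<integral>\<^sup>+ x. pf (Suc k) x * GG q J pf T m (Suc k) c x \<partial>J)
         else pf (Suc k) x * GG q J pf T m (Suc k) c x) = 0"
  proof -
    fix c assume c: "c \<in> {cp, Suc k}"
    have "ennreal (tprob q (Suc k) cp c) *
        (if c = Suc k \<or> k = 0 then (\<integral>\<^sup>+ x. 1 * GG q J (\<lambda>l x. 1) T m (Suc k) c x \<partial>J)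
         else 1 * GG q J (\<lambda>l x. 1) T m (Suc k) c x) = 0"
      using Suc.prems c unfolding GG.simps by (subst (asm) sum_eq_0_iff) auto
    then consider "ennreal (tprob q (Suc k) cp c) = 0" | "c = Suc k \<or> k = 0" "(\<integral>\<^sup>+ x. GG q J (\<lambda>l x. 1) T m (Suc k) c x \<partial>J) = 0"
       | "\<not> (c = Suc k \<or> k = 0)" "GG q J (\<lambda>l x. 1) T m (Suc k) c x = 0"
      by (auto split: if_splits)
    then show "?thesis c"
    proof cases
      case 2
      then have "AE x in J. GG q J (\<lambda>l x. 1) T m (Suc k) c x = 0"
        using nn_integral_0_iff_AE[OF mG1] by auto
      then have "AE x in J. pf (Suc k) x * GG q J pf T m (Suc k) c x = 0"
        by eventually_elim (simp add: Suc.IH)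
      then have "(\<integral>\<^sup>+ x. pf (Suc k) x * GG q J pf T m (Suc k) c x \<partial>J) = 0"
        using nn_integral_0_iff_AE[OF mG] by auto
      then show ?thesis using 2 by simp
    qed (auto simp: Suc.IH)
  qed
  then show ?case unfolding GG.simps by (intro sum.neutral) auto
qed


lemma S1:
  "j \<le> k \<Longrightarrow> cp \<noteq> j \<Longrightarrow> GG q J pf (\<lambda>c x. indicator {j} c) m k cp x0 = 0"
proof (induction m arbitrary: k cp x0)
  case 0 then show ?case by simp
next
  case (Suc m)
  have "\<And>c x. c \<in> {cp, Suc k} \<Longrightarrow> GG q J pf (\<lambda>c x. indicator {j} c) m (Suc k) c x = 0"
    using Suc.prems by (intro Suc.IH) auto
  then show ?case unfolding GG.simps by (intro sum.neutral) auto
qed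

lemma S2:
  "j \<le> k \<Longrightarrow> 1 \<le> k \<Longrightarrow>
   GG q J pf (\<lambda>c x. indicator {j} c) m k j x0 = (\<Prod>l\<in>{Suc k..k+m}. ennreal (q j l) * pf l x0)"
proof (induction m arbitrary: k x0)
  case 0 then show ?case by simp
next
  case (Suc m)
  have z: "\<And>x. GG q J pf (\<lambda>c x. indicator {j} c) m (Suc k) (Suc k) x = 0"
    using Suc.prems by (intro S1) auto
  have "GG q J pf (\<lambda>c x. indicator {j} c) (Suc m) k j x0
     = ennreal (q j (Suc k)) * (pf (Suc k) x0 * (\<Prod>l\<in>{Suc (Suc k)..Suc k+m}. ennreal (q j l) * pf l x0))"
    using Suc.prems by (simp add: z Suc.IH tprob_def)
  also have "\<dots> = (\<Prod>l\<in>{Suc k..k+Suc m}. ennreal (q j l) * pf l x0)"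
    by (subst prod.atLeast_Suc_atMost) (auto simp: mult_ac)
  finally show ?case .
qed

lemma seg_pos:
  assumes mp: "\<And>l. pf l \<in> borel_measurable J" and j: "1 \<le> j" "j \<le> N"
  shows "GG q J pf (\<lambda>c x. indicator {j} c) N 0 0 x0 =
    GG q J pf (\<lambda>c x. ennreal (1 - q c j)) (j-1) 0 0 x0 * ((\<Prod>l\<in>{Suc j..N}. ennreal (q j l)) *
      (\<integral>\<^sup>+ x. (\<Prod>l\<in>{j..N}. pf l x) \<partial>J))"
proof -
  define m where "m = N - j"
  have N: "N = (j - 1) + Suc m" using j unfolding m_def by simp
  define K where "K = (\<Prod>l\<in>{Suc j..N}. ennreal (q j l)) * (\<integral>\<^sup>+ x. (\<Prod>l\<in>{j..N}. pf l x) \<partial>J)"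
  have inner: "GG q J pf (\<lambda>c x. indicator {j} c) (Suc m) (0 + (j - 1)) c x = K * ennreal (1 - q c j)"
    if c: "c \<le> 0 + (j - 1)" for c x
  proof -
    obtain k where jk: "j = Suc k" using j by (cases j) auto
    have cj: "c \<noteq> j" using c j by simp
    have z: "\<And>x. GG q J pf (\<lambda>c x. indicator {j} c) m j c x = 0"
      using cj by (intro S1) auto
    have s2: "\<And>x. GG q J pf (\<lambda>c x. indicator {j} c) m j j x = (\<Prod>l\<in>{Suc j..j+m}. ennreal (q j l) * pf l x)"
      using j by (intro S2) auto
    have pr: "\<And>x. pf j x * (\<Prod>l\<in>{Suc j..j+m}. ennreal (q j l) * pf l x)
        = (\<Prod>l\<in>{Suc j..N}. ennreal (q j l)) * (\<Prod>l\<in>{j..N}. pf l x)"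
    proof -
      fix x
      have NN: "N = j + m" using N j by simp
      have "(\<Prod>l\<in>{j..j+m}. pf l x) = pf j x * (\<Prod>l\<in>{Suc j..j+m}. pf l x)"
        by (rule prod.atLeast_Suc_atMost) simp
      then show "pf j x * (\<Prod>l\<in>{Suc j..j+m}. ennreal (q j l) * pf l x)
        = (\<Prod>l\<in>{Suc j..N}. ennreal (q j l)) * (\<Prod>l\<in>{j..N}. pf l x)"
        unfolding NN by (simp add: prod.distrib mult_ac)
    qed
    have "GG q J pf (\<lambda>c x. indicator {j} c) (Suc m) (0 + (j - 1)) c x
       = ennreal (1 - q c j) * (\<integral>\<^sup>+ x. pf j x * GG q J pf (\<lambda>c x. indicator {j} c) m j j x \<partial>J)"
      using cj z unfolding jk by (cases k) (simp_all add: tprob_def)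
    also have "\<dots> = ennreal (1 - q c j) * K"
      unfolding s2 pr K_def
      by (subst nn_integral_cmult) (auto intro!: borel_measurable_prod_ennreal mp)
    finally show ?thesis by (simp add: mult_ac)
  qed
  have "GG q J pf (\<lambda>c x. indicator {j} c) N 0 0 x0
      = GG q J pf (\<lambda>c x. GG q J pf (\<lambda>c x. indicator {j} c) (Suc m) (0 + (j - 1)) c x) (j - 1) 0 0 x0"
    unfolding N by (rule GG_split)
  also have "\<dots> = GG q J pf (\<lambda>c x. K * ennreal (1 - q c j)) (j - 1) 0 0 x0"
    by (rule GG_congT, simp, rule inner, assumption)
  also have "\<dots> = K * GG q J pf (\<lambda>c x. ennreal (1 - q c j)) (j - 1) 0 0 x0"
    by (rule GG_cmult) (auto intro: mp)
  finally show ?thesis by (simp add: K_def mult_ac)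
qed

lemma seg_zero:
  assumes mp: "\<And>l. pf l \<in> borel_measurable J" and N: "1 \<le> N"
  shows "GG q J pf (\<lambda>c x. indicator {0} c) N 0 0 x0 =
    (\<Prod>l\<in>{1..N}. ennreal (q 0 l)) * (\<integral>\<^sup>+ x. (\<Prod>l\<in>{1..N}. pf l x) \<partial>J)"
proof -
  define m where "m = N - 1"
  have Nm: "N = Suc m" using N unfolding m_def by simp
  have z: "\<And>x. GG q J pf (\<lambda>c x. indicator {0} c) m (Suc 0) (Suc 0) x = 0"
    by (intro S1) auto
  have s2: "\<And>x. GG q J pf (\<lambda>c x. indicator {0} c) m 1 0 x = (\<Prod>l\<in>{Suc 1..1+m}. ennreal (q 0 l) * pf l x)"
    by (intro S2) auto
  have pr: "\<And>x. pf 1 x * (\<Prod>l\<in>{Suc 1..1+m}. ennreal (q 0 l) * pf l x)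
        = (\<Prod>l\<in>{2..N}. ennreal (q 0 l)) * (\<Prod>l\<in>{1..N}. pf l x)"
  proof -
      fix x
      have "(\<Prod>l\<in>{1..1+m}. pf l x) = pf 1 x * (\<Prod>l\<in>{Suc 1..1+m}. pf l x)"
        by (rule prod.atLeast_Suc_atMost) simp
      then show "pf 1 x * (\<Prod>l\<in>{Suc 1..1+m}. ennreal (q 0 l) * pf l x)
        = (\<Prod>l\<in>{2..N}. ennreal (q 0 l)) * (\<Prod>l\<in>{1..N}. pf l x)"
        unfolding Nm by (simp add: prod.distrib mult_ac numeral_2_eq_2)
    qed
  have "GG q J pf (\<lambda>c x. indicator {0} c) N 0 0 x0
      = ennreal (q 0 1) * (\<integral>\<^sup>+ x. pf 1 x * GG q J pf (\<lambda>c x. indicator {0} c) m 1 0 x \<partial>J)"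
    unfolding Nm by (simp add: z tprob_def)
  also have "\<dots> = ennreal (q 0 1) * ((\<Prod>l\<in>{2..N}. ennreal (q 0 l)) * (\<integral>\<^sup>+ x. (\<Prod>l\<in>{1..N}. pf l x) \<partial>J))"
    unfolding s2 pr
    by (subst nn_integral_cmult) (auto intro!: borel_measurable_prod_ennreal mp)
  also have "\<dots> = (\<Prod>l\<in>{1..N}. ennreal (q 0 l)) * (\<integral>\<^sup>+ x. (\<Prod>l\<in>{1..N}. pf l x) \<partial>J)"
    using N by (simp add: prod.atLeast_Suc_atMost[of "Suc 0" N] mult_ac numeral_2_eq_2)
  finally show ?thesis .
qed


definition pfab :: "('x \<Rightarrow> 'y \<Rightarrow> real) \<Rightarrow> (nat \<Rightarrow> 'y) \<Rightarrow> nat \<Rightarrow> nat \<Rightarrow> nat \<Rightarrow> 'x \<Rightarrow> ennreal" where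
  "pfab p y a b l x = (if a \<le> l \<and> l \<le> b then ennreal (p x (y l)) else 1)"

definition cpo :: "(nat \<times> 'x) list \<Rightarrow> nat" where
  "cpo h = (if h = [] then 0 else fst (last h))"

lemma PP_snoc:
  assumes a: "1 \<le> a"
  shows "(\<Prod>l\<in>{a..min b (Suc (length h))}. ennreal (p (Xof (h @ [(c, x)]) l) (y l)))
    = (\<Prod>l\<in>{a..min b (length h)}. ennreal (p (Xof h l) (y l))) * pfab p y a b (Suc (length h)) x"
proof -
  have cong: "(\<Prod>l\<in>{a..min b (length h)}. ennreal (p (Xof (h @ [(c, x)]) l) (y l)))
     = (\<Prod>l\<in>{a..min b (length h)}. ennreal (p (Xof h l) (y l)))"
    using a by (intro prod.cong refl) (auto simp: Xof_def nth_append)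
  have last: "Xof (h @ [(c, x)]) (Suc (length h)) = x" by (simp add: Xof_def)
  show ?thesis
  proof (cases "a \<le> Suc (length h) \<and> Suc (length h) \<le> b")
    case True
    then have m1: "min b (Suc (length h)) = Suc (length h)" and m2: "min b (length h) = length h"
      by auto
    have "(\<Prod>l\<in>{a..Suc (length h)}. ennreal (p (Xof (h @ [(c, x)]) l) (y l)))
      = ennreal (p (Xof (h @ [(c, x)]) (Suc (length h))) (y (Suc (length h)))) *
        (\<Prod>l\<in>{a..length h}. ennreal (p (Xof (h @ [(c, x)]) l) (y l)))"
      by (rule prod.nat_ivl_Suc') (use True in auto)
    then show ?thesis using True cong last unfolding m1 m2 by (simp add: pfab_def mult_ac)
  next
    case False
    then have eqs: "{a..min b (Suc (length h))} = {a..min b (length h)}" by auto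
    have "pfab p y a b (Suc (length h)) x = 1" using False unfolding pfab_def by auto
    then show ?thesis unfolding eqs cong by simp
  qed
qed

lemma EG:
  assumes mp: "\<And>l. pfab p y a b l \<in> borel_measurable J" and a1: "1 \<le> a" and bi: "b \<le> i"
  shows "length h + m = i \<Longrightarrow>
    Epath q J m h (\<lambda>h'. Tc (Cof h' i) * (\<Prod>l\<in>{a..b}. ennreal (p (Xof h' l) (y l))))
    = (\<Prod>l\<in>{a..min b (length h)}. ennreal (p (Xof h l) (y l))) *
      GG q J (pfab p y a b) (\<lambda>c x. Tc c) m (length h) (cpo h) (snd (last h))"
proof (induction m arbitrary: h)
  case 0
  then have "Cof h i = cpo h"
    by (cases "h = []") (auto simp: Cof_def cpo_def last_conv_nth)
  then show ?case using 0 bi by (simp add: min_def mult_ac)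
next
  case (Suc m)
  define g where "g = (\<lambda>h'. Tc (Cof h' i) * (\<Prod>l\<in>{a..b}. ennreal (p (Xof h' l) (y l))))"
  define PP where "PP = (\<Prod>l\<in>{a..min b (length h)}. ennreal (p (Xof h l) (y l)))"
  define k where "k = length h"
  define G where "G = GG q J (pfab p y a b) (\<lambda>c x. Tc c) m (Suc k)"
  have IH: "\<And>c x. Epath q J m (h @ [(c, x)]) g = PP * (pfab p y a b (Suc k) x * G c x)"
  proof -
    fix c x
    have "Epath q J m (h @ [(c, x)]) g = (\<Prod>l\<in>{a..min b (Suc (length h))}. ennreal (p (Xof (h @ [(c, x)]) l) (y l))) *
      GG q J (pfab p y a b) (\<lambda>c x. Tc c) m (Suc (length h)) c x"
      using Suc.IH[of "h @ [(c, x)]"] Suc.prems by (simp add: g_def cpo_def)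
    then show "Epath q J m (h @ [(c, x)]) g = PP * (pfab p y a b (Suc k) x * G c x)"
      unfolding PP_snoc[OF a1] by (simp add: PP_def G_def k_def mult_ac)
  qed
  have mG: "\<And>c. (\<lambda>x. pfab p y a b (Suc k) x * G c x) \<in> borel_measurable J"
    unfolding G_def by (intro GG_meas2 mp) auto
  have trm: "\<And>c. (if c = Suc k \<or> h = [] then (\<integral>\<^sup>+ x. Epath q J m (h @ [(c, x)]) g \<partial>J)
        else Epath q J m (h @ [(c, snd (last h))]) g)
      = PP * (if c = Suc k \<or> k = 0 then (\<integral>\<^sup>+ x. pfab p y a b (Suc k) x * G c x \<partial>J)
        else pfab p y a b (Suc k) (snd (last h)) * G c (snd (last h)))"
    unfolding IH by (auto simp: nn_integral_cmult[OF mG[unfolded k_def]] k_def)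
  have "Epath q J (Suc m) h g = (\<Sum>c\<in>{cpo h, Suc k}. ennreal (tprob q (Suc k) (cpo h) c) *
        (if c = Suc k \<or> h = [] then (\<integral>\<^sup>+ x. Epath q J m (h @ [(c, x)]) g \<partial>J)
         else Epath q J m (h @ [(c, snd (last h))]) g))"
    by (simp add: Let_def cpo_def k_def)
  also have "\<dots> = PP * GG q J (pfab p y a b) (\<lambda>c x. Tc c) (Suc m) k (cpo h) (snd (last h))"
    unfolding trm GG.simps G_def sum_distrib_left by (simp add: mult_ac)
  finally show ?case by (simp add: g_def PP_def k_def)
qed




locale CP =
  fixes J :: "'x measure" and \<psi> :: "'y measure"
    and p :: "'x \<Rightarrow> 'y \<Rightarrow> real" and q :: "nat \<Rightarrow> nat \<Rightarrow> real"
    and y :: "nat \<Rightarrow> 'y" and n :: nat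
  assumes PS: "prob_space J"
    and Q01: "\<And>j i. j < i \<Longrightarrow> i \<le> n \<Longrightarrow> 0 \<le> q j i \<and> q j i \<le> 1"
    and PNN: "\<And>x v. 0 \<le> p x v"
    and PM: "(\<lambda>(x, v). p x v) \<in> borel_measurable (J \<Otimes>\<^sub>M \<psi>)"
    and YS: "\<And>l. 1 \<le> l \<Longrightarrow> l \<le> n \<Longrightarrow> y l \<in> space \<psi>"
    and IPOS: "\<And>j i. 0 < j \<Longrightarrow> j \<le> i \<Longrightarrow> i \<le> n \<Longrightarrow>
           0 < (\<integral>\<^sup>+ x. (\<Prod>l\<in>{j..i}. ennreal (p x (y l))) \<partial>J)"
    and IFIN: "\<And>j i. 0 < j \<Longrightarrow> j \<le> i \<Longrightarrow> i \<le> n \<Longrightarrow>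
           (\<integral>\<^sup>+ x. (\<Prod>l\<in>{j..i}. ennreal (p x (y l))) \<partial>J) < \<infinity>"
begin

definition x00 :: 'x where "x00 = snd (last ([] :: (nat \<times> 'x) list))"

lemma space1: "emeasure J (space J) = 1"
  using PS by (simp add: prob_space.emeasure_space_1)

lemma pmeas: "1 \<le> l \<Longrightarrow> l \<le> n \<Longrightarrow> (\<lambda>x. ennreal (p x (y l))) \<in> borel_measurable J"
proof -
  assume l: "1 \<le> l" "l \<le> n"
  have "(\<lambda>x. p x (y l)) \<in> borel_measurable J"
    using measurable_comp[OF measurable_Pair2'[OF YS[OF l]] PM] by (simp add: comp_def)
  then show ?thesis by measurable
qed

lemma pfab_meas: "1 \<le> a \<Longrightarrow> b \<le> n \<Longrightarrow> pfab p y a b l \<in> borel_measurable J"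
  unfolding pfab_def using pmeas[of l] by (cases "a \<le> l \<and> l \<le> b") auto

lemma jdens_GG:
  assumes "1 \<le> a" "b \<le> i" "i \<le> n"
  shows "jdens q J p y i j a b = GG q J (pfab p y a b) (\<lambda>c x. indicator {j} c) i 0 0 x00"
proof -
  have e: "(\<lambda>h. indicator {h'. Cof h' i = j} h * (\<Prod>l\<in>{a..b}. ennreal (p (Xof h l) (y l))))
     = (\<lambda>h. (\<lambda>c. indicator {j} c) (Cof h i) * (\<Prod>l\<in>{a..b}. ennreal (p (Xof h l) (y l))))"
    by (auto simp: indicator_def fun_eq_iff)
  show ?thesis
    unfolding jdens_def e
    using EG[of p y a b J i "[]" i q "\<lambda>c. indicator {j} c"] assms pfab_meas[of a b]
    by (simp add: cpo_def x00_def)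
qed

lemma mdens_GG:
  assumes "i \<le> n"
  shows "mdens q J p y i = GG q J (pfab p y 1 i) (\<lambda>c x. 1) i 0 0 x00"
proof -
  have e: "(\<lambda>h. (\<Prod>l\<in>{1..i}. ennreal (p (Xof h l) (y l))))
     = (\<lambda>h. (\<lambda>c. 1) (Cof h i) * (\<Prod>l\<in>{1..i}. ennreal (p (Xof h l) (y l))))"
    by auto
  show ?thesis
    unfolding mdens_def e
    using EG[of p y 1 i J i "[]" i q "\<lambda>c. 1"] assms pfab_meas[of 1 i]
    by (simp add: cpo_def x00_def)
qed


lemma GG11: "cp \<le> k \<Longrightarrow> k + m \<le> n \<Longrightarrow> GG q J (\<lambda>l x. 1) (\<lambda>c x. 1) m k cp x = 1"
proof (induction m arbitrary: k cp x)
  case 0 then show ?case by simp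
next
  case (Suc m)
  have IH1: "\<And>x. GG q J (\<lambda>l x. 1) (\<lambda>c x. 1) m (Suc k) cp x = 1"
    using Suc.prems by (intro Suc.IH) auto
  have IH2: "\<And>x. GG q J (\<lambda>l x. 1) (\<lambda>c x. 1) m (Suc k) (Suc k) x = 1"
    using Suc.prems by (intro Suc.IH) auto
  have IH1f: "GG q J (\<lambda>l x. 1) (\<lambda>c x. 1) m (Suc k) cp = (\<lambda>x. 1)" using IH1 by auto
  have IH2f: "GG q J (\<lambda>l x. 1) (\<lambda>c x. 1) m (Suc k) (Suc k) = (\<lambda>x. 1)" using IH2 by auto
  have "GG q J (\<lambda>l x. 1) (\<lambda>c x. 1) (Suc m) k cp x = (\<Sum>c\<in>{cp, Suc k}. ennreal (tprob q (Suc k) cp c))"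
    unfolding GG.simps
  proof (rule sum.cong[OF refl])
    fix c assume c: "c \<in> {cp, Suc k}"
    have f: "GG q J (\<lambda>l x. 1) (\<lambda>c x. 1) m (Suc k) c = (\<lambda>x. 1)" using IH1 IH2 c by auto
    show "ennreal (tprob q (Suc k) cp c) * (if c = Suc k \<or> k = 0 then (\<integral>\<^sup>+ x. 1 * GG q J (\<lambda>l x. 1) (\<lambda>c x. 1) m (Suc k) c x \<partial>J)
         else 1 * GG q J (\<lambda>l x. 1) (\<lambda>c x. 1) m (Suc k) c x) = ennreal (tprob q (Suc k) cp c)"
      by (simp add: f space1)
  qed
  also have "\<dots> = ennreal (q cp (Suc k)) + ennreal (1 - q cp (Suc k))"
    using Suc.prems by (simp add: tprob_def)
  also have "\<dots> = 1"
    using Q01[of cp "Suc k"] Suc.prems by (subst ennreal_plus[symmetric]) auto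
  finally show ?case .
qed

lemma prod_pfab: "a \<le> c \<Longrightarrow> (\<Prod>l\<in>{c..N}. pfab p y a b l x) = (\<Prod>l\<in>{c..min N b}. ennreal (p x (y l)))"
  by (rule prod.mono_neutral_cong_right) (auto simp: pfab_def)

definition Iab :: "nat \<Rightarrow> nat \<Rightarrow> ennreal" where
  "Iab a b = (\<integral>\<^sup>+ x. (\<Prod>l\<in>{a..b}. ennreal (p x (y l))) \<partial>J)"

lemma Iab_pos: "1 \<le> a \<Longrightarrow> b \<le> n \<Longrightarrow> 0 < Iab a b \<and> Iab a b < \<infinity>"
  unfolding Iab_def
  by (cases "a \<le> b") (use IPOS[of a b] IFIN[of a b] in \<open>auto simp: space1\<close>)

definition beta :: "(nat \<Rightarrow> 'x \<Rightarrow> ennreal) \<Rightarrow> nat \<Rightarrow> ennreal" where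
  "beta pf j = (if j = 0 then 1 else GG q J pf (\<lambda>c x. ennreal (1 - q c j)) (j-1) 0 0 x00)"

definition Qj :: "nat \<Rightarrow> nat \<Rightarrow> ennreal" where
  "Qj j N = (\<Prod>l\<in>{Suc j..N}. ennreal (q j l))"

lemma segA:
  assumes a: "1 \<le> a" "b \<le> n" "a \<le> max j 1" and jN: "j \<le> N"
  shows "GG q J (pfab p y a b) (\<lambda>c x. indicator {j} c) N 0 0 x00 = beta (pfab p y a b) j * (Qj j N * Iab (max j 1) (min N b))"
proof -
  have mp: "\<And>l. pfab p y a b l \<in> borel_measurable J" using a by (intro pfab_meas) auto
  show ?thesis
  proof (cases "j = 0")
    case True
    show ?thesis
    proof (cases "N = 0")
      case True
      then show ?thesis using \<open>j = 0\<close> by (simp add: beta_def Qj_def Iab_def space1)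
    next
      case False
      have sz: "GG q J (pfab p y a b) (\<lambda>c x. indicator {0} c) N 0 0 x00 =
        (\<Prod>l\<in>{1..N}. ennreal (q 0 l)) * (\<integral>\<^sup>+ x. (\<Prod>l\<in>{1..N}. pfab p y a b l x) \<partial>J)"
        by (rule seg_zero) (use mp False in auto)
      have "a \<le> 1" using a \<open>j = 0\<close> by simp
      then show ?thesis using \<open>j = 0\<close> sz prod_pfab[where a=a and c=1 and N=N and b=b]
        by (simp add: beta_def Qj_def Iab_def)
    qed
  next
    case False
    have sp: "GG q J (pfab p y a b) (\<lambda>c x. indicator {j} c) N 0 0 x00 =
      GG q J (pfab p y a b) (\<lambda>c x. ennreal (1 - q c j)) (j-1) 0 0 x00 * ((\<Prod>l\<in>{Suc j..N}. ennreal (q j l)) *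
      (\<integral>\<^sup>+ x. (\<Prod>l\<in>{j..N}. pfab p y a b l x) \<partial>J))"
      by (rule seg_pos) (use mp False jN in auto)
    have "a \<le> j" "max j 1 = j" using a False by auto
    then show ?thesis using sp False prod_pfab[where a=a and c=j and N=N and b=b]
      by (simp add: beta_def Qj_def Iab_def)
  qed
qed

lemma beta_cong: "(\<And>l x. 1 \<le> l \<Longrightarrow> l < j \<Longrightarrow> pf l x = pf' l x) \<Longrightarrow> beta pf j = beta pf' j"
  unfolding beta_def by (auto intro!: GG_congpf)

lemma beta1_le: "j \<le> n \<Longrightarrow> beta (\<lambda>l x. 1) j \<le> 1"
proof (cases "j = 0")
  case False
  assume jn: "j \<le> n"
  have "GG q J (\<lambda>l x. 1) (\<lambda>c x. ennreal (1 - q c j)) (j-1) 0 0 x00 \<le> GG q J (\<lambda>l x. 1) (\<lambda>c x. 1) (j-1) 0 0 x00"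
    using Q01 False jn by (intro GG_mono) auto
  also have "\<dots> = 1" using jn by (intro GG11) auto
  finally show ?thesis using False by (simp add: beta_def)
qed (simp add: beta_def)

lemma beta_zero: "(\<And>l. pf l \<in> borel_measurable J) \<Longrightarrow> beta (\<lambda>l x. 1) j = 0 \<Longrightarrow> beta pf j = 0"
  unfolding beta_def by (cases "j = 0") (auto intro: GG_zero_pf)

lemma Qj_fin: "N \<le> n \<Longrightarrow> Qj j N = ennreal (\<Prod>l\<in>{Suc j..N}. q j l)"
  unfolding Qj_def using Q01 by (intro prod_ennreal) auto

definition AA :: "nat \<Rightarrow> nat \<Rightarrow> ennreal" where
  "AA j N = GG q J (pfab p y 1 N) (\<lambda>c x. indicator {j} c) N 0 0 x00"

definition MM :: "nat \<Rightarrow> ennreal" where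
  "MM N = GG q J (pfab p y 1 N) (\<lambda>c x. 1) N 0 0 x00"

lemma Msum: "N \<le> n \<Longrightarrow> MM N = (\<Sum>j\<in>{..N}. AA j N)"
proof -
  assume N: "N \<le> n"
  have mp: "\<And>l. pfab p y 1 N l \<in> borel_measurable J" using N by (intro pfab_meas) auto
  have "MM N = GG q J (pfab p y 1 N) (\<lambda>c x. \<Sum>j\<in>{..N}. indicator {j} c) N 0 0 x00"
    unfolding MM_def by (rule GG_congT) (auto simp: indicator_def)
  also have "\<dots> = (\<Sum>j\<in>{..N}. AA j N)"
    unfolding AA_def by (rule GG_sum[OF mp]) auto
  finally show ?thesis .
qed

lemma Mdecomp:
  assumes i: "1 \<le> i" "i \<le> n"
  shows "MM (i-1) = (\<Sum>k<i. ennreal (q k i) * AA k (i-1)) + beta (pfab p y 1 (i-1)) i"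
proof -
  have mp: "\<And>l. pfab p y 1 (i-1) l \<in> borel_measurable J" using i by (intro pfab_meas) auto
  let ?G = "GG q J (pfab p y 1 (i-1))"
  have "(\<Sum>k<i. ennreal (q k i) * AA k (i-1)) = (\<Sum>k<i. ?G (\<lambda>c x. ennreal (q k i) * indicator {k} c) (i-1) 0 0 x00)"
    unfolding AA_def by (intro sum.cong refl GG_cmult[symmetric] mp) auto
  also have "\<dots> = ?G (\<lambda>c x. \<Sum>k<i. ennreal (q k i) * indicator {k} c) (i-1) 0 0 x00"
    by (rule GG_sum[symmetric, OF mp]) auto
  finally have s: "(\<Sum>k<i. ennreal (q k i) * AA k (i-1)) = ?G (\<lambda>c x. \<Sum>k<i. ennreal (q k i) * indicator {k} c) (i-1) 0 0 x00" .
  have b: "beta (pfab p y 1 (i-1)) i = ?G (\<lambda>c x. ennreal (1 - q c i)) (i-1) 0 0 x00"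
    using i by (simp add: beta_def)
  have "(\<Sum>k<i. ennreal (q k i) * AA k (i-1)) + beta (pfab p y 1 (i-1)) i
     = ?G (\<lambda>c x. (\<Sum>k<i. ennreal (q k i) * indicator {k} c) + ennreal (1 - q c i)) (i-1) 0 0 x00"
    unfolding s b by (rule GG_add[symmetric, OF mp]) auto
  also have "\<dots> = ?G (\<lambda>c x. 1) (i-1) 0 0 x00"
  proof (rule GG_congT)
    fix c x assume c: "c \<le> 0 + (i - 1)"
    then have ci: "c < i" using i by auto
    have e: "(\<Sum>k<i. ennreal (q k i) * indicator {k} c) = ennreal (q c i)"
      using ci by (simp add: indicator_def sum.delta' if_distrib cong: if_cong)
    show "(\<Sum>k<i. ennreal (q k i) * indicator {k} c) + ennreal (1 - q c i) = 1"
      unfolding e using Q01[OF ci i(2)] by (subst ennreal_plus[symmetric]) auto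
  qed simp
  finally show ?thesis unfolding MM_def by simp
qed


lemma beta_le_M: "j \<le> n \<Longrightarrow> 1 \<le> j \<Longrightarrow> j \<le> Suc N \<Longrightarrow> N \<le> n \<Longrightarrow> beta (pfab p y 1 N) j \<le> MM (j-1)"
proof -
  assume j: "1 \<le> j" "j \<le> Suc N" "N \<le> n" and jn: "j \<le> n"
  have "beta (pfab p y 1 N) j = GG q J (pfab p y 1 N) (\<lambda>c x. ennreal (1 - q c j)) (j-1) 0 0 x00"
    using j by (simp add: beta_def)
  also have "\<dots> \<le> GG q J (pfab p y 1 N) (\<lambda>c x. 1) (j-1) 0 0 x00"
    using Q01 j jn by (intro GG_mono) auto
  also have "\<dots> = GG q J (pfab p y 1 (j-1)) (\<lambda>c x. 1) (j-1) 0 0 x00"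
    using j by (intro GG_congpf) (auto simp: pfab_def fun_eq_iff)
  finally show ?thesis by (simp add: MM_def)
qed

lemma Mfin: "N \<le> n \<Longrightarrow> MM N < \<infinity>"
proof (induction N rule: less_induct)
  case (less N)
  have "AA j N < \<infinity>" if j: "j \<le> N" for j
  proof -
    have eq: "AA j N = beta (pfab p y 1 N) j * (Qj j N * Iab (max j 1) N)"
      unfolding AA_def using segA[of 1 N j N] less.prems j by simp
    have b: "beta (pfab p y 1 N) j < \<infinity>"
    proof (cases "j = 0")
      case True then show ?thesis by (simp add: beta_def)
    next
      case False
      then have "beta (pfab p y 1 N) j \<le> MM (j-1)" using beta_le_M[of j N] j less.prems by auto
      also have "MM (j-1) < \<infinity>" using less.IH[of "j-1"] False j less.prems by auto
      finally show ?thesis .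
    qed
    have "Qj j N < \<infinity>" using Qj_fin[of N j] less.prems by simp
    moreover have "Iab (max j 1) N < \<infinity>" using Iab_pos[of "max j 1" N] less.prems by auto
    ultimately show ?thesis unfolding eq using b by (simp add: ennreal_mult_less_top)
  qed
  then show ?case using Msum[OF less.prems] by simp
qed

lemma AAfin: "j \<le> N \<Longrightarrow> N \<le> n \<Longrightarrow> AA j N < \<infinity>"
  using Mfin[of N] Msum[of N] by (simp add: ennreal_sum_less_top)

lemma beta1_fin: "j \<le> n \<Longrightarrow> j \<le> Suc N \<Longrightarrow> N \<le> n \<Longrightarrow> beta (pfab p y 1 N) j < \<infinity>"
proof (cases "j = 0")
  case False
  assume "j \<le> n" "j \<le> Suc N" "N \<le> n"
  then show ?thesis using False le_less_trans[OF beta_le_M[of j N] Mfin[of "j-1"]] by auto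
qed (simp add: beta_def)

lemma level_j:
  assumes i: "1 \<le> i" "i \<le> n" and j: "j \<le> i"
  shows "AA j i = beta (pfab p y 1 (i-1)) j * (Qj j i * Iab (max j 1) i)"
    and "jdens q J p y i j (max j 1) i = beta (\<lambda>l x. 1) j * (Qj j i * Iab (max j 1) i)"
    and "jdens q J p y i j (max j 1) (i-1) = beta (\<lambda>l x. 1) j * (Qj j i * Iab (max j 1) (i-1))"
proof -
  have b1: "beta (pfab p y 1 i) j = beta (pfab p y 1 (i-1)) j"
    using j by (intro beta_cong) (auto simp: pfab_def)
  show "AA j i = beta (pfab p y 1 (i-1)) j * (Qj j i * Iab (max j 1) i)"
    unfolding AA_def using segA[of 1 i j i] i j b1 by simp
  have b2: "beta (pfab p y (max j 1) i) j = beta (\<lambda>l x. 1) j"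
    by (intro beta_cong) (auto simp: pfab_def)
  show "jdens q J p y i j (max j 1) i = beta (\<lambda>l x. 1) j * (Qj j i * Iab (max j 1) i)"
    using jdens_GG[of "max j 1" i i j] segA[of "max j 1" i j i] i j b2 by simp
  have b3: "beta (pfab p y (max j 1) (i-1)) j = beta (\<lambda>l x. 1) j"
    by (intro beta_cong) (auto simp: pfab_def)
  show "jdens q J p y i j (max j 1) (i-1) = beta (\<lambda>l x. 1) j * (Qj j i * Iab (max j 1) (i-1))"
  proof -
    have mi: "min i (i-1) = i-1" by simp
    show ?thesis using jdens_GG[of "max j 1" "i-1" i j] segA[of "max j 1" "i-1" j i] i j b3
      unfolding mi by simp
  qed
qed

lemma level_prev:
  assumes i: "1 \<le> i" "i \<le> n" and j: "j < i"
  shows "AA j (i-1) = beta (pfab p y 1 (i-1)) j * (Qj j (i-1) * Iab (max j 1) (i-1))"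
  unfolding AA_def using segA[of 1 "i-1" j "i-1"] i j by simp


definition rQ :: "nat \<Rightarrow> nat \<Rightarrow> real" where
  "rQ j N = (\<Prod>l\<in>{Suc j..N}. q j l)"

lemma rQ_nn: "N \<le> n \<Longrightarrow> 0 \<le> rQ j N"
  unfolding rQ_def using Q01 by (intro prod_nonneg) auto

lemma Qj_rQ: "N \<le> n \<Longrightarrow> Qj j N = ennreal (rQ j N)"
  unfolding rQ_def by (rule Qj_fin)

lemma rQ_step: "j < i \<Longrightarrow> rQ j i = q j i * rQ j (i-1)"
proof -
  assume ji: "j < i"
  then obtain i' where i': "i = Suc i'" by (cases i) auto
  show ?thesis unfolding rQ_def i' using ji i' by (subst prod.nat_ivl_Suc') auto
qed

lemma e2r: "N \<le> n \<Longrightarrow> enn2real (b * (Qj j N * I)) = enn2real b * (rQ j N * enn2real I)"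
  by (simp add: enn2real_mult Qj_rQ rQ_nn)

lemma alg:
  fixes bD bA Q Ip Im :: real
  assumes "0 \<le> bD" "0 \<le> bA" "0 \<le> Q" "0 < Ip" "0 < Im" "bD = 0 \<Longrightarrow> bA = 0"
  shows "(bD*(Q*Ip))/(bD*(Q*Im)) * (bA*(Q*Im)) = bA*(Q*Ip)"
proof (cases "bD * Q = 0")
  case True
  show ?thesis
  proof (cases "Q = 0")
    case True then show ?thesis by simp
  next
    case False
    then have "bD = 0" using \<open>bD * Q = 0\<close> by simp
    then have "bA = 0" using assms(6) by blast
    then show ?thesis by simp
  qed
next
  case False
  then show ?thesis using assms by (simp add: field_simps)
qed

lemma bD_bA:
  assumes "j \<le> Suc N" "N \<le> n" "j \<le> n"
  shows "enn2real (beta (\<lambda>l x. 1) j) = 0 \<Longrightarrow> enn2real (beta (pfab p y 1 N) j) = 0"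
proof -
  assume z: "enn2real (beta (\<lambda>l x. 1) j) = 0"
  have b1: "beta (\<lambda>l x. 1) j \<le> 1" using beta1_le assms(3) by blast
  have "beta (\<lambda>l x. 1) j < \<top>" using le_less_trans[OF b1 ennreal_one_less_top] .
  then have b0: "beta (\<lambda>l x. 1) j = 0" using z unfolding enn2real_eq_0_iff by auto
  have mp: "\<And>l. pfab p y 1 N l \<in> borel_measurable J" using assms(2) by (rule pfab_meas[OF order_refl])
  have "beta (pfab p y 1 N) j = 0" by (rule beta_zero[OF mp b0])
  then show ?thesis by simp
qed

lemma enn_pos: "0 < x \<Longrightarrow> x < \<infinity> \<Longrightarrow> 0 < enn2real x"
  by (simp add: enn2real_positive_iff)

lemma cpost_eq: "i \<le> n \<Longrightarrow> cpost q J p y j i = enn2real (AA j i) / enn2real (MM i)"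
proof -
  assume i: "i \<le> n"
  have "jdens q J p y i j 1 i = AA j i" using jdens_GG[of 1 i i j] i by (simp add: AA_def)
  moreover have "mdens q J p y i = MM i" using mdens_GG[OF i] by (simp add: MM_def)
  ultimately show ?thesis by (simp add: cpost_def)
qed

lemma real_level:
  assumes i: "1 \<le> i" "i \<le> n"
  shows K1: "\<And>j. j < i \<Longrightarrow> opred q J p y j i * q j i * enn2real (AA j (i-1)) = enn2real (AA j i)"
    and K1p: "\<And>j. j < i \<Longrightarrow> 0 < q j i * enn2real (AA j (i-1)) \<Longrightarrow> 0 < enn2real (AA j i)"
    and K2: "opred q J p y i i * enn2real (beta (pfab p y 1 (i-1)) i) = enn2real (AA i i)"
    and K2p: "0 < enn2real (beta (pfab p y 1 (i-1)) i) \<Longrightarrow> 0 < enn2real (AA i i)"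
    and K3: "enn2real (MM (i-1)) = (\<Sum>k<i. q k i * enn2real (AA k (i-1))) + enn2real (beta (pfab p y 1 (i-1)) i)"
    and K4: "enn2real (MM i) = (\<Sum>j<i. enn2real (AA j i)) + enn2real (AA i i)"
proof -
  have i1: "i - 1 \<le> n" using i by simp
  {
    fix j assume j: "j < i"
    define bA where "bA = enn2real (beta (pfab p y 1 (i-1)) j)"
    define bD where "bD = enn2real (beta (\<lambda>l x. 1) j)"
    define Ip where "Ip = enn2real (Iab (max j 1) i)"
    define Im where "Im = enn2real (Iab (max j 1) (i-1))"
    have a: "enn2real (AA j i) = bA * (rQ j i * Ip)"
      unfolding bA_def Ip_def level_j(1)[OF i less_imp_le[OF j]] using e2r i by simp
    have a': "enn2real (AA j (i-1)) = bA * (rQ j (i-1) * Im)"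
      unfolding bA_def Im_def level_prev[OF i j] using e2r i1 by simp
    have o: "opred q J p y j i = (bD * (rQ j i * Ip)) / (bD * (rQ j i * Im))"
      unfolding opred_def level_j(2,3)[OF i less_imp_le[OF j]] bD_def Ip_def Im_def using e2r i by simp
    have Ip: "0 < Ip" unfolding Ip_def using Iab_pos[of "max j 1" i] i by (intro enn_pos) auto
    have Im: "0 < Im" unfolding Im_def using Iab_pos[of "max j 1" "i-1"] i1 by (intro enn_pos) auto
    have bDA: "bD = 0 \<Longrightarrow> bA = 0" unfolding bD_def bA_def using bD_bA[of j "i-1"] i j by auto
    have rs: "rQ j i = q j i * rQ j (i-1)" using rQ_step j by simp
    have qn: "0 \<le> q j i" using Q01 j i by auto
    have rn: "0 \<le> rQ j (i-1)" using rQ_nn i1 by simp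
    have "opred q J p y j i * q j i * enn2real (AA j (i-1)) = opred q J p y j i * (bA * (rQ j i * Im))"
      unfolding a' rs by (simp add: mult_ac)
    also have "\<dots> = bA * (rQ j i * Ip)"
      unfolding o using Ip Im bDA qn rn rs by (intro alg) (auto simp: bD_def bA_def)
    finally show "opred q J p y j i * q j i * enn2real (AA j (i-1)) = enn2real (AA j i)" using a by simp
    assume pos: "0 < q j i * enn2real (AA j (i-1))"
    have "enn2real (AA j i) = (q j i * enn2real (AA j (i-1))) * Ip / Im"
      unfolding a a' rs using Im by (simp add: field_simps)
    then show "0 < enn2real (AA j i)" using pos Ip Im by simp
  }
  {
    define bA where "bA = enn2real (beta (pfab p y 1 (i-1)) i)"
    define bD where "bD = enn2real (beta (\<lambda>l x. 1) i)"
    define Ip where "Ip = enn2real (Iab i i)"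
    have mi: "max i 1 = i" using i by simp
    have r1: "rQ i i = 1" by (simp add: rQ_def)
    have I1: "enn2real (Iab i (i-1)) = 1" using i by (simp add: Iab_def space1)
    have a: "enn2real (AA i i) = bA * (1 * Ip)"
      unfolding bA_def Ip_def level_j(1)[OF i order_refl] unfolding mi using e2r[of i] i r1 by simp
    have o: "opred q J p y i i = (bD * (1 * Ip)) / (bD * (1 * 1))"
      unfolding opred_def level_j(2,3)[OF i order_refl] unfolding mi bD_def Ip_def using i I1 by (simp add: Qj_def enn2real_mult)
    have Ip: "0 < Ip" unfolding Ip_def using Iab_pos[of i i] i by (intro enn_pos) auto
    have bDA: "bD = 0 \<Longrightarrow> bA = 0" unfolding bD_def bA_def using bD_bA[of i "i-1"] i by auto
    have "opred q J p y i i * bA = opred q J p y i i * (bA * (1 * 1))" by simp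
    also have "\<dots> = bA * (1 * Ip)"
      unfolding o using Ip bDA by (intro alg) (auto simp: bD_def bA_def)
    finally show "opred q J p y i i * enn2real (beta (pfab p y 1 (i-1)) i) = enn2real (AA i i)"
      using a by (simp add: bA_def)
    show "0 < enn2real (beta (pfab p y 1 (i-1)) i) \<Longrightarrow> 0 < enn2real (AA i i)"
      using a Ip by (simp add: bA_def)
  }
  have finA: "\<And>k. k < i \<Longrightarrow> AA k (i-1) < \<infinity>" using AAfin i1 by auto
  have finB: "beta (pfab p y 1 (i-1)) i < \<infinity>" using beta1_fin[of i "i-1"] i by simp
  have "enn2real (MM (i-1)) = enn2real ((\<Sum>k<i. ennreal (q k i) * AA k (i-1)) + beta (pfab p y 1 (i-1)) i)"
    using Mdecomp[OF i] by simp
  also have "\<dots> = (\<Sum>k<i. enn2real (ennreal (q k i) * AA k (i-1))) + enn2real (beta (pfab p y 1 (i-1)) i)"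
  proof -
    have f: "\<And>k. k \<in> {..<i} \<Longrightarrow> ennreal (q k i) * AA k (i-1) < \<top>"
      using finA by (simp add: ennreal_mult_less_top)
    then have "(\<Sum>k<i. ennreal (q k i) * AA k (i-1)) < \<top>" by simp
    moreover have "enn2real (\<Sum>k<i. ennreal (q k i) * AA k (i-1)) = (\<Sum>k<i. enn2real (ennreal (q k i) * AA k (i-1)))"
      using enn2real_sum[of "{..<i}" "\<lambda>k. ennreal (q k i) * AA k (i-1)"] f by (simp add: o_def)
    ultimately show ?thesis using finB by (simp add: enn2real_plus)
  qed
  also have "\<dots> = (\<Sum>k<i. q k i * enn2real (AA k (i-1))) + enn2real (beta (pfab p y 1 (i-1)) i)"
    using Q01 i by (intro arg_cong2[where f="(+)"] sum.cong refl) (auto simp: enn2real_mult)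
  finally show "enn2real (MM (i-1)) = (\<Sum>k<i. q k i * enn2real (AA k (i-1))) + enn2real (beta (pfab p y 1 (i-1)) i)" .
  have finA2: "\<And>k. k \<le> i \<Longrightarrow> AA k i < \<infinity>" using AAfin i by auto
  have "enn2real (MM i) = enn2real ((\<Sum>j<i. AA j i) + AA i i)"
    using Msum[OF i(2)] by (simp add: lessThan_Suc_atMost[symmetric])
  also have "\<dots> = (\<Sum>j<i. enn2real (AA j i)) + enn2real (AA i i)"
    using finA2 enn2real_sum[of "{..<i}" "\<lambda>j. AA j i"] by (simp add: enn2real_plus o_def)
  finally show "enn2real (MM i) = (\<Sum>j<i. enn2real (AA j i)) + enn2real (AA i i)" .
qed


lemma M_pos: "N \<le> n \<Longrightarrow> 0 < enn2real (MM N)"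
proof (induction N)
  case 0 then show ?case by (simp add: MM_def)
next
  case (Suc N)
  define i where "i = Suc N"
  have i: "1 \<le> i" "i \<le> n" using Suc.prems by (auto simp: i_def)
  have m1: "0 < enn2real (MM (i-1))" using Suc by (simp add: i_def)
  have qa: "\<And>k. k < i \<Longrightarrow> 0 \<le> q k i * enn2real (AA k (i-1))" using Q01 i by auto
  have ex: "\<exists>j\<le>i. 0 < enn2real (AA j i)"
  proof (cases "0 < enn2real (beta (pfab p y 1 (i-1)) i)")
    case True then show ?thesis using K2p[OF i] by auto
  next
    case False
    then have "0 < (\<Sum>k<i. q k i * enn2real (AA k (i-1)))" using K3[OF i] m1 by simp
    then have "\<exists>k\<in>{..<i}. 0 < q k i * enn2real (AA k (i-1))"
    proof (rule contrapos_pp)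
      assume "\<not> (\<exists>k\<in>{..<i}. 0 < q k i * enn2real (AA k (i-1)))"
      then have "\<forall>k\<in>{..<i}. q k i * enn2real (AA k (i-1)) \<le> 0" by (auto simp: not_less)
      then have "(\<Sum>k<i. q k i * enn2real (AA k (i-1))) \<le> 0" by (intro sum_nonpos) auto
      then show "\<not> 0 < (\<Sum>k<i. q k i * enn2real (AA k (i-1)))" by simp
    qed
    then obtain k where k: "k < i" "0 < q k i * enn2real (AA k (i-1))" by auto
    then show ?thesis using K1p[OF i] by (intro exI[of _ k]) auto
  qed
  then obtain j where j: "j \<le> i" "0 < enn2real (AA j i)" by auto
  have "enn2real (AA j i) \<le> (\<Sum>j<i. enn2real (AA j i)) + enn2real (AA i i)"
  proof (cases "j = i")
    case True then show ?thesis by (simp add: sum_nonneg)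
  next
    case False
    then have "enn2real (AA j i) \<le> (\<Sum>j<i. enn2real (AA j i))" using j
      by (intro member_le_sum) auto
    then show ?thesis using enn2real_nonneg[of "AA i i"] by linarith
  qed
  then show ?case using K4[OF i] j by (simp add: i_def)
qed

lemma final_i:
  assumes i: "1 \<le> i" "i \<le> n"
  defines "Zx \<equiv> (\<Sum>k<i. opred q J p y k i * q k i * cpost q J p y k (i - 1)) + opred q J p y i i * (1 - (\<Sum>k<i. q k i * cpost q J p y k (i - 1)))"
  shows "\<forall>j<i. cpost q J p y j i = opred q J p y j i / Zx * q j i * cpost q J p y j (i - 1)"
    and "cpost q J p y i i = opred q J p y i i / Zx * (1 - (\<Sum>k<i. q k i * cpost q J p y k (i - 1)))"
proof -
  define m where "m = enn2real (MM i)"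
  define m1 where "m1 = enn2real (MM (i-1))"
  define a where "a = (\<lambda>j. enn2real (AA j i))"
  define a' where "a' = (\<lambda>j. enn2real (AA j (i-1)))"
  define ob where "ob = opred q J p y"
  define B where "B = enn2real (beta (pfab p y 1 (i-1)) i)"
  have m: "0 < m" unfolding m_def using M_pos i by simp
  have m1: "0 < m1" unfolding m1_def using M_pos i by simp
  have c: "\<And>j. cpost q J p y j i = a j / m" unfolding a_def m_def using cpost_eq i by simp
  have c': "\<And>j. cpost q J p y j (i-1) = a' j / m1" unfolding a'_def m1_def using cpost_eq i by simp
  have k1: "\<And>j. j < i \<Longrightarrow> ob j i * q j i * a' j = a j" unfolding ob_def a_def a'_def using K1[OF i] by simp
  have k2: "ob i i * B = a i" unfolding ob_def a_def B_def using K2[OF i] by simp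
  have k3: "m1 = (\<Sum>k<i. q k i * a' k) + B" unfolding m1_def a'_def B_def using K3[OF i] by simp
  have k4: "m = (\<Sum>j<i. a j) + a i" unfolding m_def a_def using K4[OF i] by simp
  have s1: "(\<Sum>k<i. ob k i * q k i * (a' k / m1)) = (\<Sum>k<i. a k) / m1"
    unfolding sum_divide_distrib using k1 by (intro sum.cong refl) auto
  have s2: "1 - (\<Sum>k<i. q k i * (a' k / m1)) = B / m1"
  proof -
    have "(\<Sum>k<i. q k i * (a' k / m1)) = (\<Sum>k<i. q k i * a' k) / m1"
      unfolding sum_divide_distrib by simp
    then show ?thesis using k3 m1 by (simp add: field_simps)
  qed
  have Z: "Zx = m / m1"
  proof -
    have "Zx = (\<Sum>k<i. a k) / m1 + ob i i * B / m1" unfolding Zx_def c' ob_def[symmetric] s1 s2 by simp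
    also have "\<dots> = ((\<Sum>k<i. a k) + ob i i * B) / m1" by (simp add: add_divide_distrib)
    finally show ?thesis unfolding k2 k4 .
  qed
  have Zm: "Zx * m1 = m" unfolding Z using m1 by simp
  show "\<forall>j<i. cpost q J p y j i = opred q J p y j i / Zx * q j i * cpost q J p y j (i - 1)"
  proof (intro allI impI)
    fix j assume j: "j < i"
    have e1: "ob j i / Zx * q j i * (a' j / m1) = (ob j i * q j i * a' j) / (Zx * m1)" by simp
    show "cpost q J p y j i = opred q J p y j i / Zx * q j i * cpost q J p y j (i - 1)"
      unfolding c c' ob_def[symmetric] e1 Zm k1[OF j] ..
  qed
  have e2: "ob i i / Zx * (B / m1) = (ob i i * B) / (Zx * m1)" by simp
  show "cpost q J p y i i = opred q J p y i i / Zx * (1 - (\<Sum>k<i. q k i * cpost q J p y k (i - 1)))"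
    unfolding c c' ob_def[symmetric] s2 e2 Zm k2 ..
qed

lemma final:
  "cpost q J p y 0 0 = 1 \<and>
    (\<forall>i\<in>{1..n}.
      (let c = cpost q J p y; ob = opred q J p y;
           Z = (\<Sum>k<i. ob k i * q k i * c k (i - 1)) + ob i i * (1 - (\<Sum>k<i. q k i * c k (i - 1)))
       in (\<forall>j<i. c j i = ob j i / Z * q j i * c j (i - 1)) \<and>
          c i i = ob i i / Z * (1 - (\<Sum>k<i. q k i * c k (i - 1)))))"
proof (intro conjI ballI)
  show "cpost q J p y 0 0 = 1" by (simp add: cpost_def jdens_def mdens_def Cof_def)
next
  fix i :: nat assume "i \<in> {1..n}"
  then have i: "1 \<le> i" "i \<le> n" by auto
  show "let c = cpost q J p y; ob = opred q J p y;
           Z = (\<Sum>k<i. ob k i * q k i * c k (i - 1)) + ob i i * (1 - (\<Sum>k<i. q k i * c k (i - 1)))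
       in (\<forall>j<i. c j i = ob j i / Z * q j i * c j (i - 1)) \<and>
          c i i = ob i i / Z * (1 - (\<Sum>k<i. q k i * c k (i - 1)))"
    unfolding Let_def by (intro conjI final_i[OF i])
qed

end

theorem mainTheorem2:
  fixes J :: "'x measure" and \<psi> :: "'y measure"
    and p :: "'x \<Rightarrow> 'y \<Rightarrow> real" and q :: "nat \<Rightarrow> nat \<Rightarrow> real"
    and y :: "nat \<Rightarrow> 'y" and n :: nat
  assumes "n \<ge> 1"
    and "prob_space J"
    and "sigma_finite_measure \<psi>"
    and "\<And>j i. j < i \<Longrightarrow> i \<le> n \<Longrightarrow> 0 \<le> q j i \<and> q j i \<le> 1"
    and "\<And>x v. 0 \<le> p x v"
    and "(\<lambda>(x, v). p x v) \<in> borel_measurable (J \<Otimes>\<^sub>M \<psi>)"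
    and "\<And>x. x \<in> space J \<Longrightarrow> (\<integral>\<^sup>+ v. ennreal (p x v) \<partial>\<psi>) = 1"
    and "\<And>l. 1 \<le> l \<Longrightarrow> l \<le> n \<Longrightarrow> y l \<in> space \<psi>"
    and "\<And>j i. 0 < j \<Longrightarrow> j \<le> i \<Longrightarrow> i \<le> n \<Longrightarrow>
           0 < (\<integral>\<^sup>+ x. (\<Prod>l\<in>{j..i}. ennreal (p x (y l))) \<partial>J)"
    and "\<And>j i. 0 < j \<Longrightarrow> j \<le> i \<Longrightarrow> i \<le> n \<Longrightarrow>
           (\<integral>\<^sup>+ x. (\<Prod>l\<in>{j..i}. ennreal (p x (y l))) \<partial>J) < \<infinity>"
  shows "cpost q J p y 0 0 = 1 \<and>
    (\<forall>i\<in>{1..n}.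
      (let c = cpost q J p y; ob = opred q J p y;
           Z = (\<Sum>k<i. ob k i * q k i * c k (i - 1)) + ob i i * (1 - (\<Sum>k<i. q k i * c k (i - 1)))
       in (\<forall>j<i. c j i = ob j i / Z * q j i * c j (i - 1)) \<and>
          c i i = ob i i / Z * (1 - (\<Sum>k<i. q k i * c k (i - 1)))))"
proof -
  interpret CP J \<psi> p q y n
    using assms by (intro CP.intro) auto
  show ?thesis by (rule final)
qed

end
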